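(* For every $M\in\Lambda$, the set $\mathcal A(M)$ is either empty or an ideal (i.e. non-empty, directed and downward closed) with respect to $\sqsubseteq$.
   Context: Call-by-value $\lambda$-calculus with permutations: $\lambda$-terms and values are $M,N::=V\mid MN$, $V::=x\mid\lambda x.M$, up to $\alpha$-conversion. Rules: $(\beta_v)$ $(\lambda x.M)V\to M\{x:=V\}$ if $V$ is a value; $(\sigma_1)$ $(\lambda x.M)NP\to(\lambda x.MP)N$ if $x\notin\mathrm{FV}(P)$; $(\sigma_3)$ $V((\lambda x.M)N)\to(\lambda x.VM)N$ if $V$ is a value and $x\notin\mathrm{FV}(V)$. $\to_{\mathsf v}$ is their contextual closure, $\twoheadrightarrow_{\mathsf v}$ its reflexive-transitive closure. $\Lambda_\bot$ is the set of $\lambda$-terms possibly containing a constant $\bot$; $\sqsubseteq$ is the smallest context-closed preorder on $\Lambda_\bot$ with $\bot\sqsubseteq x$ and $\bot\sqsubseteq\lambda x.M$. Approximants $\mathcal A$ ($k\ge0$): $A::=B\mid C$; $B::=x\mid\lambda x.A\mid\bot\mid xBA_1\cdots A_k$; $C::=(\lambda x.A)(yBA_1\cdots A_k)$. $\mathcal A(M)=\{A\in\mathcal A\mid\exists N\in\Lambda,\ M\twoheadrightarrow_{\mathsf v}N,\ A\sqsubseteq N\}$. Directed and downward closed are understood within $\mathcal A$. *)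

theory Defs
  imports Main
begin

datatype trm = Var nat | Lam trm | App trm trm | Bot

fun no_bot :: "trm \<Rightarrow> bool" where
  "no_bot (Var n) = True"
| "no_bot (Lam M) = no_bot M"
| "no_bot (App M N) = (no_bot M \<and> no_bot N)"
| "no_bot Bot = False"

fun is_val :: "trm \<Rightarrow> bool" where
  "is_val (Var n) = True"
| "is_val (Lam M) = True"
| "is_val (App M N) = False"
| "is_val Bot = False"

fun lift :: "nat \<Rightarrow> trm \<Rightarrow> trm" where
  "lift k (Var i) = (if i < k then Var i else Var (Suc i))"
| "lift k (Lam M) = Lam (lift (Suc k) M)"
| "lift k (App M N) = App (lift k M) (lift k N)"
| "lift k Bot = Bot"

fun subst :: "trm \<Rightarrow> nat \<Rightarrow> trm \<Rightarrow> trm" where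
  "subst (Var i) k s = (if i < k then Var i else if i = k then s else Var (i - 1))"
| "subst (Lam M) k s = Lam (subst M (Suc k) (lift 0 s))"
| "subst (App M N) k s = App (subst M k s) (subst N k s)"
| "subst Bot k s = Bot"

text \<open>One-step reduction: contextual closure of beta_v, sigma_1, sigma_3.
  In sigma_1 / sigma_3 the side condition "x not free in P (resp. V)" is
  realised by lifting P (resp. V) under the new binder.\<close>
inductive step_v :: "trm \<Rightarrow> trm \<Rightarrow> bool" where
  beta_v: "is_val V \<Longrightarrow> step_v (App (Lam M) V) (subst M 0 V)"
| sigma1: "step_v (App (App (Lam M) N) P) (App (Lam (App M (lift 0 P))) N)"
| sigma3: "is_val V \<Longrightarrow> step_v (App V (App (Lam M) N)) (App (Lam (App (lift 0 V) M)) N)"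
| ctx_lam: "step_v M M' \<Longrightarrow> step_v (Lam M) (Lam M')"
| ctx_appl: "step_v M M' \<Longrightarrow> step_v (App M N) (App M' N)"
| ctx_appr: "step_v N N' \<Longrightarrow> step_v (App M N) (App M N')"

abbreviation steps_v :: "trm \<Rightarrow> trm \<Rightarrow> bool" where
  "steps_v \<equiv> step_v\<^sup>*\<^sup>*"

inductive approx :: "trm \<Rightarrow> trm \<Rightarrow> bool" where
  refl: "approx M M"
| trans: "approx M N \<Longrightarrow> approx N P \<Longrightarrow> approx M P"
| bot_var: "approx Bot (Var x)"
| bot_lam: "approx Bot (Lam M)"
| ctx_lam: "approx M M' \<Longrightarrow> approx (Lam M) (Lam M')"
| ctx_appl: "approx M M' \<Longrightarrow> approx (App M N) (App M' N)"
| ctx_appr: "approx N N' \<Longrightarrow> approx (App M N) (App M N')"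

inductive isA :: "trm \<Rightarrow> bool" and isB :: "trm \<Rightarrow> bool" and isN :: "trm \<Rightarrow> bool" where
  A_B: "isB t \<Longrightarrow> isA t"
| A_C: "isA A \<Longrightarrow> isN N \<Longrightarrow> isA (App (Lam A) N)"
| B_var: "isB (Var x)"
| B_lam: "isA A \<Longrightarrow> isB (Lam A)"
| B_bot: "isB Bot"
| B_N: "isN N \<Longrightarrow> isB N"
| N_base: "isB B \<Longrightarrow> isN (App (Var x) B)"
| N_app: "isN N \<Longrightarrow> isA A \<Longrightarrow> isN (App N A)"

definition approximants :: "trm \<Rightarrow> trm set" where
  "approximants M = {A. isA A \<and> (\<exists>N. no_bot N \<and> steps_v M N \<and> approx A N)}"

definition directed :: "trm set \<Rightarrow> bool" where
  "directed S \<longleftrightarrow> (\<forall>a\<in>S. \<forall>b\<in>S. \<exists>c\<in>S. approx a c \<and> approx b c)"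

definition downward_closed :: "trm set \<Rightarrow> bool" where
  "downward_closed S \<longleftrightarrow> (\<forall>a\<in>S. \<forall>b. isA b \<and> approx b a \<longrightarrow> b \<in> S)"

definition is_ideal :: "trm set \<Rightarrow> bool" where
  "is_ideal S \<longleftrightarrow> S \<noteq> {} \<and> directed S \<and> downward_closed S"

end

theory Submission
  imports Defs
begin


lemma lift_lift: "i \<le> k \<Longrightarrow> lift (Suc k) (lift i t) = lift i (lift k t)"
  by (induct t arbitrary: i k) auto

lemma lift_subst: "j \<le> i \<Longrightarrow> lift i (subst t j s) = subst (lift (Suc i) t) j (lift i s)"
  by (induct t arbitrary: i j s) (auto simp: lift_lift)

lemma lift_subst_lt: "i \<le> j \<Longrightarrow> lift i (subst t j s) = subst (lift i t) (Suc j) (lift i s)"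
  by (induct t arbitrary: i j s) (auto simp: lift_lift)

lemma subst_lift [simp]: "subst (lift k t) k s = t"
  by (induct t arbitrary: k s) auto

lemma subst_subst: "i \<le> j \<Longrightarrow> subst (subst t (Suc j) (lift i v)) i (subst u j v) = subst (subst t i u) j v"
  by (induct t arbitrary: i j u v) (auto simp: lift_lift [symmetric] lift_subst_lt)

lemma is_val_lift [simp]: "is_val (lift k t) = is_val t"
  by (cases t) auto

lemma is_val_subst: "is_val t \<Longrightarrow> is_val s \<Longrightarrow> is_val (subst t k s)"
  by (cases t) auto

inductive beta :: "trm \<Rightarrow> trm \<Rightarrow> bool" where
  b_root: "is_val V \<Longrightarrow> beta (App (Lam M) V) (subst M 0 V)"
| b_lam: "beta M M' \<Longrightarrow> beta (Lam M) (Lam M')"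
| b_appl: "beta M M' \<Longrightarrow> beta (App M N) (App M' N)"
| b_appr: "beta N N' \<Longrightarrow> beta (App M N) (App M N')"

inductive sig :: "trm \<Rightarrow> trm \<Rightarrow> bool" where
  s1: "sig (App (App (Lam M) N) P) (App (Lam (App M (lift 0 P))) N)"
| s3: "is_val V \<Longrightarrow> sig (App V (App (Lam M) N)) (App (Lam (App (lift 0 V) M)) N)"
| s_lam: "sig M M' \<Longrightarrow> sig (Lam M) (Lam M')"
| s_appl: "sig M M' \<Longrightarrow> sig (App M N) (App M' N)"
| s_appr: "sig N N' \<Longrightarrow> sig (App M N) (App M N')"

lemma step_v_eq: "step_v = sup beta sig"
proof (intro ext iffI)
  fix M N assume "step_v M N" then show "sup beta sig M N"
    by induct (auto intro: beta.intros sig.intros)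
next
  fix M N assume "sup beta sig M N"
  then have "beta M N \<or> sig M N" by simp
  then show "step_v M N"
  proof
    assume "beta M N" then show ?thesis by induct (auto intro: step_v.intros)
  next
    assume "sig M N" then show ?thesis by induct (auto intro: step_v.intros)
  qed
qed

lemma rtc_map: "(\<And>x y. R x y \<Longrightarrow> R (f x) (f y)) \<Longrightarrow> R\<^sup>*\<^sup>* a b \<Longrightarrow> R\<^sup>*\<^sup>* (f a) (f b)"
proof -
  assume h: "\<And>x y. R x y \<Longrightarrow> R (f x) (f y)" and "R\<^sup>*\<^sup>* a b"
  from \<open>R\<^sup>*\<^sup>* a b\<close> show ?thesis
    by (induct rule: rtranclp_induct) (auto intro: rtranclp.rtrancl_into_rtrancl h)
qed

lemma beta_lam_rtc: "beta\<^sup>*\<^sup>* M M' \<Longrightarrow> beta\<^sup>*\<^sup>* (Lam M) (Lam M')"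
  by (rule rtc_map[where f=Lam]) (auto intro: beta.intros)
lemma beta_appl_rtc: "beta\<^sup>*\<^sup>* M M' \<Longrightarrow> beta\<^sup>*\<^sup>* (App M N) (App M' N)"
  by (rule rtc_map[where f="\<lambda>x. App x N"]) (auto intro: beta.intros)
lemma beta_appr_rtc: "beta\<^sup>*\<^sup>* N N' \<Longrightarrow> beta\<^sup>*\<^sup>* (App M N) (App M N')"
  by (rule rtc_map[where f="\<lambda>x. App M x"]) (auto intro: beta.intros)
lemma sig_lam_rtc: "sig\<^sup>*\<^sup>* M M' \<Longrightarrow> sig\<^sup>*\<^sup>* (Lam M) (Lam M')"
  by (rule rtc_map[where f=Lam]) (auto intro: sig.intros)
lemma sig_appl_rtc: "sig\<^sup>*\<^sup>* M M' \<Longrightarrow> sig\<^sup>*\<^sup>* (App M N) (App M' N)"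
  by (rule rtc_map[where f="\<lambda>x. App x N"]) (auto intro: sig.intros)
lemma sig_appr_rtc: "sig\<^sup>*\<^sup>* N N' \<Longrightarrow> sig\<^sup>*\<^sup>* (App M N) (App M N')"
  by (rule rtc_map[where f="\<lambda>x. App M x"]) (auto intro: sig.intros)

inductive par :: "trm \<Rightarrow> trm \<Rightarrow> bool" where
  p_var: "par (Var x) (Var x)"
| p_bot: "par Bot Bot"
| p_lam: "par M M' \<Longrightarrow> par (Lam M) (Lam M')"
| p_app: "par M M' \<Longrightarrow> par N N' \<Longrightarrow> par (App M N) (App M' N')"
| p_beta: "par M M' \<Longrightarrow> par V V' \<Longrightarrow> is_val V \<Longrightarrow> par (App (Lam M) V) (subst M' 0 V')"

lemma par_refl: "par t t"
  by (induct t) (auto intro: par.intros)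

lemma par_val: "par V V' \<Longrightarrow> is_val V \<Longrightarrow> is_val V'"
  by (induct rule: par.induct) auto

lemma par_lift: "par M M' \<Longrightarrow> par (lift k M) (lift k M')"
proof (induct arbitrary: k rule: par.induct)
  case (p_beta M M' V V')
  then show ?case
    using par.p_beta[of "lift (Suc k) M" "lift (Suc k) M'" "lift k V" "lift k V'"]
    by (simp add: lift_subst)
qed (auto intro: par.intros)

lemma par_subst: "par M M' \<Longrightarrow> par N N' \<Longrightarrow> is_val N \<Longrightarrow> par (subst M k N) (subst M' k N')"
proof (induct arbitrary: k N N' rule: par.induct)
  case (p_var x) then show ?case by (auto intro: par.intros)
next
  case (p_lam M M')
  have "par (subst M (Suc k) (lift 0 N)) (subst M' (Suc k) (lift 0 N'))"
    using p_lam.hyps(2) par_lift p_lam.prems by simp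
  then show ?case by (simp add: par.p_lam)
next
  case (p_beta M M' V V')
  have "par (App (Lam (subst M (Suc k) (lift 0 N))) (subst V k N))
            (subst (subst M' (Suc k) (lift 0 N')) 0 (subst V' k N'))"
  proof (rule par.p_beta)
    show "par (subst M (Suc k) (lift 0 N)) (subst M' (Suc k) (lift 0 N'))"
      using p_beta.hyps(2) par_lift p_beta.prems by simp
  qed (use p_beta in \<open>auto intro: is_val_subst\<close>)
  then show ?case by (simp add: subst_subst[of 0 k, simplified])
qed (auto intro: par.intros)

inductive_cases par_LamE: "par (Lam M) N"
inductive_cases par_AppE: "par (App M N) P"
inductive_cases par_VarE: "par (Var x) N"
inductive_cases par_BotE: "par Bot N"

lemma par_diamond: "par M M1 \<Longrightarrow> par M M2 \<Longrightarrow> \<exists>M3. par M1 M3 \<and> par M2 M3"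
proof (induct arbitrary: M2 rule: par.induct)
  case (p_var x) then show ?case by (auto elim: par_VarE intro: par.intros)
next
  case p_bot then show ?case by (auto elim: par_BotE intro: par.intros)
next
  case (p_lam M M') then show ?case by (auto elim!: par_LamE intro: par.intros) 
next
  case (p_app M M' N N')
  from p_app.prems show ?case
  proof (cases rule: par_AppE[consumes 1])
    case (1 M'' N'')
    then show ?thesis using p_app by (blast intro: par.intros)
  next
    case (2 L L' V')
    from p_app 2 obtain L1 where L1: "M' = Lam L1" "par L L1" by (auto elim: par_LamE)
    from p_app.hyps(2) 2 L1 obtain X where "par (Lam L1) X" "par (Lam L') X"
      using par.p_lam by blast
    then obtain X' where X: "par L1 X'" "par L' X'" by (auto elim!: par_LamE)
    from p_app.hyps(4) 2 obtain Y where Y: "par N' Y" "par V' Y" by blast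
    have "is_val N'" using 2 p_app par_val by blast
    then have "par (App M' N') (subst X' 0 Y)" using L1 X Y by (auto intro: par.intros)
    moreover have "par (subst L' 0 V') (subst X' 0 Y)"
      using X Y 2 par_val by (blast intro: par_subst)
    ultimately show ?thesis using 2 by blast
  qed
next
  case (p_beta M M' V V')
  from p_beta.prems show ?case
  proof (cases rule: par_AppE[consumes 1])
    case (1 M'' N'')
    then obtain L where L: "M'' = Lam L" "par M L" by (auto elim: par_LamE)
    from p_beta L obtain X where X: "par M' X" "par L X" by blast
    from p_beta 1 obtain Y where Y: "par V' Y" "par N'' Y" by blast
    have "is_val N''" using 1 p_beta par_val by blast
    then have "par M2 (subst X 0 Y)" using 1 L X Y by (auto intro: par.intros)
    moreover have "par (subst M' 0 V') (subst X 0 Y)"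
      using X Y p_beta par_val by (blast intro: par_subst)
    ultimately show ?thesis by blast
  next
    case (2 L L' V'')
    from p_beta 2 obtain X where X: "par M' X" "par L' X" by blast
    from p_beta 2 obtain Y where Y: "par V' Y" "par V'' Y" by blast
    show ?thesis using X Y 2 p_beta par_val by (blast intro: par_subst)
  qed
qed

definition CR :: "('a \<Rightarrow> 'a \<Rightarrow> bool) \<Rightarrow> bool" where
  "CR R \<longleftrightarrow> (\<forall>a b c. R\<^sup>*\<^sup>* a b \<longrightarrow> R\<^sup>*\<^sup>* a c \<longrightarrow> (\<exists>d. R\<^sup>*\<^sup>* b d \<and> R\<^sup>*\<^sup>* c d))"

definition diamond :: "('a \<Rightarrow> 'a \<Rightarrow> bool) \<Rightarrow> bool" where
  "diamond R \<longleftrightarrow> (\<forall>a b c. R a b \<longrightarrow> R a c \<longrightarrow> (\<exists>d. R b d \<and> R c d))"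

lemma diamond_strip:
  assumes dia: "diamond R"
  shows "R\<^sup>*\<^sup>* a b \<Longrightarrow> R a c \<Longrightarrow> \<exists>d. R b d \<and> R\<^sup>*\<^sup>* c d"
proof (induct arbitrary: c rule: rtranclp_induct)
  case base then show ?case by blast
next
  case (step b b')
  then obtain d where "R b d" "R\<^sup>*\<^sup>* c d" by blast
  with dia step(2) obtain e where "R b' e" "R d e" unfolding diamond_def by blast
  then show ?case using \<open>R\<^sup>*\<^sup>* c d\<close> by (blast intro: rtranclp.rtrancl_into_rtrancl)
qed

lemma diamond_CR:
  assumes dia: "diamond R"
  shows "CR R"
proof -
  have "R\<^sup>*\<^sup>* a c \<Longrightarrow> R\<^sup>*\<^sup>* a b \<Longrightarrow> \<exists>d. R\<^sup>*\<^sup>* b d \<and> R\<^sup>*\<^sup>* c d" for a b c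
  proof (induct arbitrary: b rule: rtranclp_induct)
    case base then show ?case by blast
  next
    case (step c c')
    then obtain d where d: "R\<^sup>*\<^sup>* b d" "R\<^sup>*\<^sup>* c d" by blast
    from diamond_strip[OF dia d(2) step(2)] obtain e where "R d e" "R\<^sup>*\<^sup>* c' e" by blast
    then show ?case using d by (blast intro: rtranclp.rtrancl_into_rtrancl)
  qed
  then show ?thesis unfolding CR_def by blast
qed

lemma beta_par: "beta M N \<Longrightarrow> par M N"
  by (induct rule: beta.induct) (auto intro: par.intros par_refl)

lemma par_beta: "par M N \<Longrightarrow> beta\<^sup>*\<^sup>* M N"
proof (induct rule: par.induct)
  case (p_app M M' N N')
  then show ?case by (blast intro: beta_appl_rtc beta_appr_rtc rtranclp_trans)
next
  case (p_lam M M') then show ?case by (blast intro: beta_lam_rtc)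
next
  case (p_beta M M' V V')
  have "beta\<^sup>*\<^sup>* (App (Lam M) V) (App (Lam M') V')"
    using p_beta by (blast intro: beta_lam_rtc beta_appl_rtc beta_appr_rtc rtranclp_trans)
  moreover have "beta (App (Lam M') V') (subst M' 0 V')"
    using p_beta par_val by (blast intro: b_root)
  ultimately show ?case by (blast intro: rtranclp.rtrancl_into_rtrancl)
qed auto

lemma beta_rtc_par: "beta\<^sup>*\<^sup>* = par\<^sup>*\<^sup>*"
proof -
  have "beta\<^sup>*\<^sup>* \<le> par\<^sup>*\<^sup>*" by (rule rtranclp_mono) (auto intro: beta_par)
  moreover have "par\<^sup>*\<^sup>* \<le> beta\<^sup>*\<^sup>*\<^sup>*\<^sup>*" by (rule rtranclp_mono) (auto intro: par_beta)
  ultimately show ?thesis by (simp add: antisym)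
qed

lemma beta_CR: "CR beta"
proof -
  have "CR par" by (rule diamond_CR) (auto simp: diamond_def intro: par_diamond)
  then show ?thesis unfolding CR_def beta_rtc_par .
qed



lemma beta_lift: "beta M M' \<Longrightarrow> beta (lift k M) (lift k M')"
proof (induct arbitrary: k rule: beta.induct)
  case (b_root V M)
  then show ?case using beta.b_root[of "lift k V" "lift (Suc k) M"] by (simp add: lift_subst)
qed (auto intro: beta.intros)

lemma sig_lift: "sig M M' \<Longrightarrow> sig (lift k M) (lift k M')"
proof (induct arbitrary: k rule: sig.induct)
  case (s1 M N P)
  then show ?case using sig.s1[of "lift (Suc k) M" "lift k N" "lift k P"] by (simp add: lift_lift)
next
  case (s3 V M N)
  then show ?case using sig.s3[of "lift k V" "lift (Suc k) M" "lift k N"] by (simp add: lift_lift)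
qed (auto intro: sig.intros)

lemma sig_subst: "sig M M' \<Longrightarrow> is_val s \<Longrightarrow> sig (subst M k s) (subst M' k s)"
proof (induct arbitrary: k s rule: sig.induct)
  case (s1 M N P)
  then show ?case using sig.s1[of "subst M (Suc k) (lift 0 s)" "subst N k s" "subst P k s"]
    by (simp add: lift_subst_lt)
next
  case (s3 V M N)
  then show ?case using sig.s3[of "subst V k s" "subst M (Suc k) (lift 0 s)" "subst N k s"]
    by (simp add: lift_subst_lt is_val_subst)
qed (auto intro: sig.intros)

lemma sig_subst2: "sig N N' \<Longrightarrow> sig\<^sup>*\<^sup>* (subst L k N) (subst L k N')"
proof (induct L arbitrary: k N N')
  case (Lam L)
  then have "sig\<^sup>*\<^sup>* (subst L (Suc k) (lift 0 N)) (subst L (Suc k) (lift 0 N'))"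
    using sig_lift by blast
  then show ?case by (simp add: sig_lam_rtc)
next
  case (App L1 L2)
  have h1: "sig\<^sup>*\<^sup>* (subst L1 k N) (subst L1 k N')" using App by blast
  have h2: "sig\<^sup>*\<^sup>* (subst L2 k N) (subst L2 k N')" using App by blast
  show ?case using rtranclp_trans[OF sig_appl_rtc[OF h1] sig_appr_rtc[OF h2]] by simp
qed auto

lemma beta_val: "beta V V' \<Longrightarrow> is_val V \<Longrightarrow> is_val V'"
  by (induct rule: beta.induct) auto
lemma sig_val: "sig V V' \<Longrightarrow> is_val V \<Longrightarrow> is_val V'"
  by (induct rule: sig.induct) auto

fun w :: "trm \<Rightarrow> nat" where
  "w (Var x) = 2"
| "w Bot = 2"
| "w (Lam M) = w M + 1"
| "w (App M N) = 2 * w M * w N"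

lemma w_ge: "2 \<le> w t"
  by (induct t) (auto simp: mult_le_mono order_trans[OF _ mult_le_mono])

lemma w_lift [simp]: "w (lift k t) = w t"
  by (induct t arbitrary: k) auto

lemma sig_w: "sig a b \<Longrightarrow> w b < w a"
proof (induct rule: sig.induct)
  case (s1 M N P)
  have n: "2 \<le> w N" and p: "2 \<le> w P" by (rule w_ge)+
  have "2 * w N < 4 * w N * w P" using n p by (simp add: mult_le_mono) 
  then show ?case by (simp add: algebra_simps)
next
  case (s3 V M N)
  have n: "2 \<le> w N" and p: "2 \<le> w V" by (rule w_ge)+
  have "2 * w N < 4 * w V * w N" using n p by (simp add: mult_le_mono) 
  then show ?case by (simp add: algebra_simps)
next
  case (s_appl M M' N)
  have "0 < w N" using w_ge[of N] by simp
  then show ?case using s_appl by simp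
next
  case (s_appr N N' M)
  have "0 < w M" using w_ge[of M] by simp
  then show ?case using s_appr by simp
qed simp

inductive_cases sig_LamE: "sig (Lam M) N"
inductive_cases sig_AppE: "sig (App M N) P"
inductive_cases sig_VarE: "sig (Var x) N"
inductive_cases sig_BotE: "sig Bot N"
inductive_cases beta_LamE: "beta (Lam M) N"
inductive_cases beta_AppE: "beta (App M N) P"
inductive_cases beta_VarE: "beta (Var x) N"
inductive_cases beta_BotE: "beta Bot N"

lemma lc_s1:
  assumes "sig (App (App (Lam M) N) P) c"
  shows "\<exists>d. sig\<^sup>*\<^sup>* (App (Lam (App M (lift 0 P))) N) d \<and> sig\<^sup>*\<^sup>* c d"
  using assms
proof (cases rule: sig_AppE[consumes 1])
  case 1 then show ?thesis by auto
next
  case 2 then show ?thesis by auto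
next
  case (3 X)
  from 3(2) show ?thesis
  proof (cases rule: sig_AppE[consumes 1])
    case (2 M2 N2)
    let ?d = "App (Lam (App (Lam (App (lift (Suc 0) M) (lift 0 (lift 0 P)))) M2)) N2"
    have "sig (App (Lam (App M (lift 0 P))) (App (Lam M2) N2)) ?d"
      using sig.s3[of "Lam (App M (lift 0 P))" M2 N2] by (simp add: lift_lift)
    moreover have "sig c (App (Lam (App (App (Lam (lift (Suc 0) M)) M2) (lift 0 P))) N2)"
      using 3 2 sig.s1[of "App (Lam (lift (Suc 0) M)) M2" N2 P] by simp
    moreover have "sig (App (Lam (App (App (Lam (lift (Suc 0) M)) M2) (lift 0 P))) N2) ?d"
      by (intro sig.intros)
    ultimately show ?thesis using 2 by (blast intro: rtranclp.rtrancl_into_rtrancl)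
  next
    case (3 Y)
    then obtain M' where Y: "Y = Lam M'" "sig M M'" by (auto elim: sig_LamE)
    let ?d = "App (Lam (App M' (lift 0 P))) N"
    have "sig (App (Lam (App M (lift 0 P))) N) ?d"
      using Y by (intro sig.s_appl sig.s_lam)
    moreover have "sig c ?d" using 3 Y \<open>c = App X P\<close> by (simp add: sig.s1)
    ultimately show ?thesis by blast
  next
    case (4 N')
    let ?d = "App (Lam (App M (lift 0 P))) N'"
    have "sig (App (Lam (App M (lift 0 P))) N) ?d"
      using 4 by (intro sig.s_appr)
    moreover have "sig c ?d" using 3 4 by (simp add: sig.s1)
    ultimately show ?thesis by blast
  qed auto
next
  case (4 P')
  let ?d = "App (Lam (App M (lift 0 P'))) N"
  have "sig (App (Lam (App M (lift 0 P))) N) ?d"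
    using 4 by (intro sig.s_appl sig.s_lam sig.s_appr sig_lift)
  moreover have "sig c ?d" using 4 by (simp add: sig.s1)
  ultimately show ?thesis by blast
qed

lemma lc_s3:
  assumes "sig (App V (App (Lam M) N)) c" "is_val V"
  shows "\<exists>d. sig\<^sup>*\<^sup>* (App (Lam (App (lift 0 V) M)) N) d \<and> sig\<^sup>*\<^sup>* c d"
  using assms
proof (cases rule: sig_AppE[consumes 1])
  case 1 with assms(2) have False by simp
  then show ?thesis ..
next
  case 2 then show ?thesis by auto
next
  case (3 V')
  have "is_val V'" using 3 assms(2) sig_val by blast
  let ?d = "App (Lam (App (lift 0 V') M)) N"
  have "sig (App (Lam (App (lift 0 V) M)) N) ?d"
    using 3 by (intro sig.s_appl sig.s_lam sig_lift)
  moreover have "sig c ?d" using 3 \<open>is_val V'\<close> by (simp add: sig.s3)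
  ultimately show ?thesis by blast
next
  case (4 X)
  from 4(2) show ?thesis
  proof (cases rule: sig_AppE[consumes 1])
    case (2 M2 N2)
    let ?d = "App (Lam (App (Lam (App (lift 0 (lift 0 V)) (lift (Suc 0) M))) M2)) N2"
    have "sig (App (Lam (App (lift 0 V) M)) (App (Lam M2) N2)) ?d"
      using sig.s3[of "Lam (App (lift 0 V) M)" M2 N2] by (simp add: lift_lift)
    moreover have "sig c (App (Lam (App (lift 0 V) (App (Lam (lift (Suc 0) M)) M2))) N2)"
      using 4 2 assms(2) sig.s3[of V "App (Lam (lift (Suc 0) M)) M2" N2] by simp
    moreover have "sig (App (Lam (App (lift 0 V) (App (Lam (lift (Suc 0) M)) M2))) N2) ?d"
      using assms(2) by (intro sig.intros) simp
    ultimately show ?thesis using 2 by (blast intro: rtranclp.rtrancl_into_rtrancl)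
  next
    case (3 Y)
    then obtain M' where Y: "Y = Lam M'" "sig M M'" by (auto elim: sig_LamE)
    let ?d = "App (Lam (App (lift 0 V) M')) N"
    have "sig (App (Lam (App (lift 0 V) M)) N) ?d"
      using Y by (intro sig.s_appl sig.s_lam sig.s_appr)
    moreover have "sig c ?d" using 4 3 Y assms(2) by (simp add: sig.s3)
    ultimately show ?thesis by blast
  next
    case (4 N')
    let ?d = "App (Lam (App (lift 0 V) M)) N'"
    have "sig (App (Lam (App (lift 0 V) M)) N) ?d"
      using 4 by (intro sig.s_appr)
    moreover have "sig c ?d" using 4 \<open>c = App V X\<close> assms(2) by (simp add: sig.s3)
    ultimately show ?thesis by blast
  qed auto
qed

lemma sig_lc: "sig a b \<Longrightarrow> sig a c \<Longrightarrow> \<exists>d. sig\<^sup>*\<^sup>* b d \<and> sig\<^sup>*\<^sup>* c d"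
proof (induct arbitrary: c rule: sig.induct)
  case (s1 M N P) then show ?case by (rule lc_s1)
next
  case (s3 V M N) then show ?case using lc_s3 by blast
next
  case (s_lam M M')
  then show ?case by (auto elim!: sig_LamE intro: sig_lam_rtc)
next
  case (s_appl M M' N)
  have ab: "sig (App M N) (App M' N)" using s_appl(1) by (rule sig.intros)
  from s_appl.prems show ?case
  proof (cases rule: sig_AppE[consumes 1])
    case (1 L K) then show ?thesis using lc_s1[of L K N "App M' N"] ab by blast
  next
    case (2 L K) then show ?thesis using lc_s3[of M L K "App M' N"] ab by blast
  next
    case (3 M2) then show ?thesis using s_appl by (blast intro: sig_appl_rtc)
  next
    case (4 N2) then show ?thesis using s_appl by (blast intro: sig.intros r_into_rtranclp)
  qed
next
  case (s_appr N N' M)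
  have ab: "sig (App M N) (App M N')" using s_appr(1) by (rule sig.intros)
  from s_appr.prems show ?case
  proof (cases rule: sig_AppE[consumes 1])
    case (1 L K) then show ?thesis using lc_s1[of L K N "App M N'"] ab by blast
  next
    case (2 L K) then show ?thesis using lc_s3[of M L K "App M N'"] ab by blast
  next
    case (3 M2) then show ?thesis using s_appr by (blast intro: sig.intros r_into_rtranclp)
  next
    case (4 N2) then show ?thesis using s_appr by (blast intro: sig_appr_rtc)
  qed
qed

lemma sig_CR: "CR sig"
proof -
  have "\<forall>a b c. w a = n \<longrightarrow> sig\<^sup>*\<^sup>* a b \<longrightarrow> sig\<^sup>*\<^sup>* a c \<longrightarrow> (\<exists>d. sig\<^sup>*\<^sup>* b d \<and> sig\<^sup>*\<^sup>* c d)" for n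
  proof (induct n rule: less_induct)
    case (less n)
    show ?case
    proof (intro allI impI)
      fix a b c assume wa: "w a = n" and ab: "sig\<^sup>*\<^sup>* a b" and ac: "sig\<^sup>*\<^sup>* a c"
      show "\<exists>d. sig\<^sup>*\<^sup>* b d \<and> sig\<^sup>*\<^sup>* c d"
      proof (cases "a = b")
        case True then show ?thesis using ac by blast
      next
        case False
        then obtain b1 where b1: "sig a b1" "sig\<^sup>*\<^sup>* b1 b" using ab
          by (metis converse_rtranclpE)
        show ?thesis
        proof (cases "a = c")
          case True then show ?thesis using ab by blast
        next
          case False
          then obtain c1 where c1: "sig a c1" "sig\<^sup>*\<^sup>* c1 c" using ac
            by (metis converse_rtranclpE)
          obtain d1 where d1: "sig\<^sup>*\<^sup>* b1 d1" "sig\<^sup>*\<^sup>* c1 d1" using sig_lc b1 c1 by blast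
          have "w b1 < n" "w c1 < n" using sig_w b1 c1 wa by auto
          then obtain e where e: "sig\<^sup>*\<^sup>* b e" "sig\<^sup>*\<^sup>* d1 e"
            using less b1 d1 by blast
          then have "sig\<^sup>*\<^sup>* c1 e" using d1 by (blast intro: rtranclp_trans)
          then obtain f where f: "sig\<^sup>*\<^sup>* c f" "sig\<^sup>*\<^sup>* e f"
            using less \<open>w c1 < n\<close> c1 by blast
          then show ?thesis using e by (blast intro: rtranclp_trans)
        qed
      qed
    qed
  qed
  then show ?thesis unfolding CR_def by blast
qed



lemma comm1: "sig a b \<Longrightarrow> beta a c \<Longrightarrow> \<exists>d. beta\<^sup>=\<^sup>= b d \<and> sig\<^sup>*\<^sup>* c d"
proof (induct arbitrary: c rule: sig.induct)
  case (s1 M N P)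
  from s1 show ?case
  proof (cases rule: beta_AppE[consumes 1])
    case (2 X)
    from 2(2) show ?thesis
    proof (cases rule: beta_AppE[consumes 1])
      case 1
      have "beta (App (Lam (App M (lift 0 P))) N) (subst (App M (lift 0 P)) 0 N)"
        using 1 by (intro beta.b_root) simp
      then show ?thesis using 1 2 by auto
    next
      case (2 Y)
      then obtain M' where Y: "Y = Lam M'" "beta M M'" by (auto elim: beta_LamE)
      let ?d = "App (Lam (App M' (lift 0 P))) N"
      have "beta (App (Lam (App M (lift 0 P))) N) ?d"
        using Y by (intro beta.b_appl beta.b_lam)
      moreover have "sig c ?d" using 2 Y \<open>c = App X P\<close> by (simp add: sig.s1)
      ultimately show ?thesis by blast
    next
      case (3 N')
      let ?d = "App (Lam (App M (lift 0 P))) N'"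
      have "beta (App (Lam (App M (lift 0 P))) N) ?d"
        using 3 by (intro beta.b_appr)
      moreover have "sig c ?d" using 2 3 by (simp add: sig.s1)
      ultimately show ?thesis by blast
    qed
  next
    case (3 P')
    let ?d = "App (Lam (App M (lift 0 P'))) N"
    have "beta (App (Lam (App M (lift 0 P))) N) ?d"
      using 3 by (intro beta.b_appl beta.b_lam beta.b_appr beta_lift)
    moreover have "sig c ?d" using 3 by (simp add: sig.s1)
    ultimately show ?thesis by blast
  qed auto
next
  case (s3 V M N)
  from s3(2) show ?case
  proof (cases rule: beta_AppE[consumes 1])
    case 1 then show ?thesis by simp
  next
    case (2 V')
    have "is_val V'" using 2 s3(1) beta_val by blast
    let ?d = "App (Lam (App (lift 0 V') M)) N"
    have "beta (App (Lam (App (lift 0 V) M)) N) ?d"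
      using 2 by (intro beta.b_appl beta.b_lam beta.b_appl beta_lift)
    moreover have "sig c ?d" using 2 \<open>is_val V'\<close> by (simp add: sig.s3)
    ultimately show ?thesis by blast
  next
    case (3 X)
    from 3(2) show ?thesis
    proof (cases rule: beta_AppE[consumes 1])
      case 1
      have "beta (App (Lam (App (lift 0 V) M)) N) (subst (App (lift 0 V) M) 0 N)"
        using 1 by (intro beta.b_root) simp
      then show ?thesis using 1 3 by auto
    next
      case (2 Y)
      then obtain M' where Y: "Y = Lam M'" "beta M M'" by (auto elim: beta_LamE)
      let ?d = "App (Lam (App (lift 0 V) M')) N"
      have "beta (App (Lam (App (lift 0 V) M)) N) ?d"
        using Y by (intro beta.b_appl beta.b_lam beta.b_appr)
      moreover have "sig c ?d" using 2 Y 3 s3(1) by (simp add: sig.s3)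
      ultimately show ?thesis by blast
    next
      case (3 N')
      let ?d = "App (Lam (App (lift 0 V) M)) N'"
      have "beta (App (Lam (App (lift 0 V) M)) N) ?d"
        using 3 by (intro beta.b_appr)
      moreover have "sig c ?d" using 3 \<open>c = App V X\<close> s3(1) by (simp add: sig.s3)
      ultimately show ?thesis by blast
    qed
  qed
next
  case (s_lam M M')
  from s_lam(3) obtain M2 where c: "c = Lam M2" "beta M M2" by (auto elim: beta_LamE)
  with s_lam(2) obtain d where d: "beta\<^sup>=\<^sup>= M' d" "sig\<^sup>*\<^sup>* M2 d" by blast
  have "beta\<^sup>=\<^sup>= (Lam M') (Lam d)" using d(1) by (auto intro: beta.b_lam)
  moreover have "sig\<^sup>*\<^sup>* c (Lam d)" using c d by (simp add: sig_lam_rtc)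
  ultimately show ?case by blast
next
  case (s_appl M M' N)
  from s_appl(3) show ?case
  proof (cases rule: beta_AppE[consumes 1])
    case (1 L)
    from s_appl(1) 1 obtain L' where L': "M' = Lam L'" "sig L L'" by (auto elim: sig_LamE)
    have "beta (App M' N) (subst L' 0 N)" using L' 1 by (simp add: beta.b_root)
    moreover have "sig c (subst L' 0 N)" using 1 L' by (simp add: sig_subst)
    ultimately show ?thesis by blast
  next
    case (2 M2)
    with s_appl(2) obtain d where d: "beta\<^sup>=\<^sup>= M' d" "sig\<^sup>*\<^sup>* M2 d" by blast
    have "beta\<^sup>=\<^sup>= (App M' N) (App d N)" using d(1) by (auto intro: beta.b_appl)
    moreover have "sig\<^sup>*\<^sup>* c (App d N)" using 2 d by (simp add: sig_appl_rtc)
    ultimately show ?thesis by blast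
  next
    case (3 N2)
    have "beta (App M' N) (App M' N2)" using 3 by (simp add: beta.b_appr)
    moreover have "sig c (App M' N2)" using 3 s_appl(1) by (simp add: sig.s_appl)
    ultimately show ?thesis by blast
  qed
next
  case (s_appr N N' M)
  from s_appr(3) show ?case
  proof (cases rule: beta_AppE[consumes 1])
    case (1 L)
    have "is_val N'" using 1 s_appr(1) sig_val by blast
    have "beta (App M N') (subst L 0 N')" using 1 \<open>is_val N'\<close> by (simp add: beta.b_root)
    moreover have "sig\<^sup>*\<^sup>* c (subst L 0 N')" using 1 s_appr(1) by (simp add: sig_subst2)
    ultimately show ?thesis by blast
  next
    case (2 M2)
    have "beta (App M N') (App M2 N')" using 2 by (simp add: beta.b_appl)
    moreover have "sig c (App M2 N')" using 2 s_appr(1) by (simp add: sig.s_appr)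
    ultimately show ?thesis by blast
  next
    case (3 N2)
    with s_appr(2) obtain d where d: "beta\<^sup>=\<^sup>= N' d" "sig\<^sup>*\<^sup>* N2 d" by blast
    have "beta\<^sup>=\<^sup>= (App M N') (App M d)" using d(1) by (auto intro: beta.b_appr)
    moreover have "sig\<^sup>*\<^sup>* c (App M d)" using 3 d by (simp add: sig_appr_rtc)
    ultimately show ?thesis by blast
  qed
qed

lemma comm2: "sig\<^sup>*\<^sup>* a b \<Longrightarrow> beta\<^sup>=\<^sup>= a c \<Longrightarrow> \<exists>d. beta\<^sup>=\<^sup>= b d \<and> sig\<^sup>*\<^sup>* c d"
proof (induct arbitrary: c rule: rtranclp_induct)
  case base then show ?case by blast
next
  case (step b b')
  then obtain d where d: "beta\<^sup>=\<^sup>= b d" "sig\<^sup>*\<^sup>* c d" by blast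
  show ?case
  proof (cases "b = d")
    case True
    then show ?thesis using d step(2) by (blast intro: rtranclp.rtrancl_into_rtrancl)
  next
    case False
    then have "beta b d" using d(1) by auto
    from comm1[OF step(2) this] obtain e where "beta\<^sup>=\<^sup>= b' e" "sig\<^sup>*\<^sup>* d e" by blast
    then show ?thesis using d(2) by (blast intro: rtranclp_trans)
  qed
qed

lemma comm3: "beta\<^sup>*\<^sup>* a c \<Longrightarrow> sig\<^sup>*\<^sup>* a b \<Longrightarrow> \<exists>d. beta\<^sup>*\<^sup>* b d \<and> sig\<^sup>*\<^sup>* c d"
proof (induct arbitrary: b rule: rtranclp_induct)
  case base then show ?case by blast
next
  case (step c c')
  then obtain d where d: "beta\<^sup>*\<^sup>* b d" "sig\<^sup>*\<^sup>* c d" by blast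
  from comm2[OF d(2)] step(2) obtain e where e: "beta\<^sup>=\<^sup>= d e" "sig\<^sup>*\<^sup>* c' e" by blast
  have "beta\<^sup>*\<^sup>* d e" using e(1) by auto
  then show ?case using d(1) e(2) by (blast intro: rtranclp_trans)
qed

lemma HR:
  assumes "CR R" "CR S" and comm: "\<And>a b c. R\<^sup>*\<^sup>* a b \<Longrightarrow> S\<^sup>*\<^sup>* a c \<Longrightarrow> \<exists>d. S\<^sup>*\<^sup>* b d \<and> R\<^sup>*\<^sup>* c d"
  shows "CR (sup R S)"
proof -
  let ?U = "\<lambda>a b. R\<^sup>*\<^sup>* a b \<or> S\<^sup>*\<^sup>* a b"
  have "diamond ?U" unfolding diamond_def
  proof (intro allI impI)
    fix a b c assume ab: "?U a b" and ac: "?U a c"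
    show "\<exists>d. ?U b d \<and> ?U c d"
      using ab ac assms comm[of a b c] comm[of a c b] unfolding CR_def by blast
  qed
  then have "CR ?U" by (rule diamond_CR)
  have eq: "(sup R S)\<^sup>*\<^sup>* = ?U\<^sup>*\<^sup>*"
  proof (rule antisym)
    show "(sup R S)\<^sup>*\<^sup>* \<le> ?U\<^sup>*\<^sup>*" by (rule rtranclp_mono) auto
    have "?U\<^sup>*\<^sup>* \<le> (sup R S)\<^sup>*\<^sup>*\<^sup>*\<^sup>*"
    proof (rule rtranclp_mono, intro le_funI le_boolI)
      fix a b assume "?U a b"
      then show "(sup R S)\<^sup>*\<^sup>* a b"
        by (auto intro: rtranclp_mono[THEN predicate2D, rotated])
    qed
    then show "?U\<^sup>*\<^sup>* \<le> (sup R S)\<^sup>*\<^sup>*" by simp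
  qed
  show ?thesis using \<open>CR ?U\<close> unfolding CR_def eq .
qed

lemma step_CR: "CR step_v"
  unfolding step_v_eq
proof (rule HR[OF beta_CR sig_CR])
  fix a b c assume "beta\<^sup>*\<^sup>* a b" "sig\<^sup>*\<^sup>* a c"
  then show "\<exists>d. sig\<^sup>*\<^sup>* b d \<and> beta\<^sup>*\<^sup>* c d" using comm3 by blast
qed

lemma no_bot_lift [simp]: "no_bot (lift k t) = no_bot t"
  by (induct t arbitrary: k) auto

lemma no_bot_subst: "no_bot t \<Longrightarrow> no_bot s \<Longrightarrow> no_bot (subst t k s)"
  by (induct t arbitrary: k s) auto

lemma no_bot_step: "step_v M N \<Longrightarrow> no_bot M \<Longrightarrow> no_bot N"
  by (induct rule: step_v.induct) (auto intro: no_bot_subst)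

lemma no_bot_steps: "steps_v M N \<Longrightarrow> no_bot M \<Longrightarrow> no_bot N"
  by (induct rule: rtranclp_induct) (auto intro: no_bot_step)



fun le :: "trm \<Rightarrow> trm \<Rightarrow> bool" where
  "le Bot t = (t = Bot \<or> is_val t)"
| "le (Var x) t = (t = Var x)"
| "le (Lam a) t = (case t of Lam b \<Rightarrow> le a b | _ \<Rightarrow> False)"
| "le (App a1 a2) t = (case t of App b1 b2 \<Rightarrow> le a1 b1 \<and> le a2 b2 | _ \<Rightarrow> False)"

lemma le_refl: "le t t"
  by (induct t) auto

lemma le_trans: "le a b \<Longrightarrow> le b c \<Longrightarrow> le a c"
proof (induct a arbitrary: b c)
  case Bot then show ?case by (cases b; cases c) auto
next
  case (Var x) then show ?case by auto
next
  case (Lam a) then show ?case by (cases b; cases c) auto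
next
  case (App a1 a2) then show ?case by (cases b; cases c) auto
qed

lemma approx_le: "approx a b \<Longrightarrow> le a b"
  by (induct rule: approx.induct) (auto intro: le_refl le_trans)

lemma le_approx: "le a b \<Longrightarrow> approx a b"
proof (induct a arbitrary: b)
  case Bot then show ?case by (cases b) (auto intro: approx.intros)
next
  case (Var x) then show ?case by (auto intro: approx.intros)
next
  case (Lam a) then show ?case by (cases b) (auto intro: approx.intros)
next
  case (App a1 a2)
  then obtain b1 b2 where b: "b = App b1 b2" "le a1 b1" "le a2 b2" by (cases b) auto
  then have "approx (App a1 a2) (App b1 a2)" "approx (App b1 a2) (App b1 b2)"
    using App by (auto intro: approx.ctx_appl approx.ctx_appr)
  then show ?case using b by (blast intro: approx.trans)
qed

lemma approx_iff: "approx a b = le a b"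
  using approx_le le_approx by blast

inductive_cases isN_AppE: "isN (App a b)"
inductive_cases isA_AppE: "isA (App a b)"
inductive_cases isB_AppE: "isB (App a b)"
inductive_cases isN_VarE: "isN (Var a)"
inductive_cases isA_VarE: "isA (Var a)"
inductive_cases isB_VarE: "isB (Var a)"
inductive_cases isN_LamE: "isN (Lam a)"
inductive_cases isA_LamE: "isA (Lam a)"
inductive_cases isB_LamE: "isB (Lam a)"
inductive_cases isN_BotE: "isN Bot"

lemma isN_simps [simp]:
  "isN (Var x) = False" "isN (Lam a) = False" "isN Bot = False"
  "isN (App a1 a2) = ((\<exists>x. a1 = Var x) \<and> isB a2 \<or> isN a1 \<and> isA a2)"
  by (auto elim: isN_AppE isA_AppE isB_AppE isN_VarE isN_LamE isN_BotE isB_LamE isA_LamE intro: isA_isB_isN.intros)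

lemma isB_simps [simp]:
  "isB (Var x) = True" "isB (Lam a) = isA a" "isB Bot = True"
  "isB (App a1 a2) = isN (App a1 a2)"
  by (auto elim: isN_AppE isA_AppE isB_AppE isN_VarE isN_LamE isN_BotE isB_LamE isA_LamE intro: isA_isB_isN.intros simp del: isN_simps)

lemma isA_simps [simp]:
  "isA (Var x) = True" "isA (Lam a) = isA a" "isA Bot = True"
  "isA (App a1 a2) = ((\<exists>A'. a1 = Lam A' \<and> isA A') \<and> isN a2 \<or> isN (App a1 a2))"
  by (auto elim: isN_AppE isA_AppE isB_AppE isN_VarE isN_LamE isN_BotE isB_LamE isA_LamE intro: isA_isB_isN.intros simp del: isN_simps isB_simps)

lemma isN_isA: "isN t \<Longrightarrow> isA t"
  by (rule A_B, rule B_N)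

lemma isN_App_ex: "isN t \<Longrightarrow> \<exists>t1 t2. t = App t1 t2"
  by (cases t) auto

lemma L1: "isN t \<Longrightarrow> le t s \<Longrightarrow> \<not> is_val s"
  by (cases t; cases s) auto

lemma L2: "isN t \<Longrightarrow> le t (App (Lam M) X) \<Longrightarrow> False"
proof -
  assume "isN t" "le t (App (Lam M) X)"
  then obtain t1 t2 where t: "t = App t1 t2" "le t1 (Lam M)" using isN_App_ex by fastforce
  with \<open>isN t\<close> have "(\<exists>x. t1 = Var x) \<or> isN t1" by auto
  then show False using t L1[of t1 "Lam M"] by auto
qed

lemma L3: assumes "isB t" "le t (App (Lam M) X)" shows False
proof (cases t)
  case (App t1 t2) then have "isN t" using assms(1) by (simp del: isN_simps)
  then show False using L2 assms(2) by blast
qed (use assms in auto)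

lemma pres: "step_v N N' \<Longrightarrow> isA A \<Longrightarrow> le A N \<Longrightarrow> le A N'"
proof (induct arbitrary: A rule: step_v.induct)
  case (beta_v V M)
  then obtain a1 a2 where A: "A = App a1 a2" "le a1 (Lam M)" "le a2 V"
    by (cases A) (auto split: trm.splits)
  show ?case using beta_v A L1[of a2 V] L1[of a1 "Lam M"] by auto
next
  case (sigma1 M N P)
  from sigma1(2) obtain a1 a2 where A: "A = App a1 a2" "le a1 (App (Lam M) N)"
    by (cases A) (auto split: trm.splits)
  show ?case using sigma1 A L2[of a1 M N] by (cases a1) auto
next
  case (sigma3 V M N)
  then obtain a1 a2 where A: "A = App a1 a2" "le a1 V" "le a2 (App (Lam M) N)"
    by (cases A) (auto split: trm.splits)
  show ?case using sigma3 A L2[of a2 M N] L3[of a2 M N] L1[of a1 V] by auto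
next
  case (ctx_lam M M')
  show ?case
  proof (cases A)
    case (Lam a) then show ?thesis using ctx_lam by auto
  qed (use ctx_lam in auto)
next
  case (ctx_appl M M' N)
  then obtain a1 a2 where A: "A = App a1 a2" "le a1 M" "le a2 N"
    by (cases A) (auto split: trm.splits)
  have "isA a1 \<or> (\<exists>x. a1 = Var x)" using ctx_appl A by (auto intro: isN_isA)
  then have "le a1 M'"
  proof
    assume "isA a1" then show ?thesis using ctx_appl A by blast
  next
    assume "\<exists>x. a1 = Var x" then show ?thesis using A ctx_appl(1)
      by (auto elim: step_v.cases)
  qed
  then show ?case using A by simp
next
  case (ctx_appr N N' M)
  then obtain a1 a2 where A: "A = App a1 a2" "le a1 M" "le a2 N"
    by (cases A) (auto split: trm.splits)
  have "isA a2" using ctx_appr A by (auto intro: isA_isB_isN.intros)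
  then have "le a2 N'" using ctx_appr A by blast
  then show ?case using A by simp
qed

lemma pres_steps: "steps_v N N' \<Longrightarrow> isA A \<Longrightarrow> le A N \<Longrightarrow> le A N'"
  by (induct rule: rtranclp_induct) (auto intro: pres)

fun join :: "trm \<Rightarrow> trm \<Rightarrow> trm" where
  "join Bot b = b"
| "join a Bot = a"
| "join (Lam a) (Lam b) = Lam (join a b)"
| "join (App a1 a2) (App b1 b2) = App (join a1 b1) (join a2 b2)"
| "join a b = a"

lemma join_le: "le a t \<Longrightarrow> le b t \<Longrightarrow> le a (join a b) \<and> le b (join a b) \<and> le (join a b) t"
proof (induct t arbitrary: a b)
  case (Var x) then show ?case by (cases a; cases b) (auto simp: le_refl)
next
  case Bot then show ?case by (cases a; cases b) (auto simp: le_refl)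
next
  case (Lam t) then show ?case by (cases a; cases b) (auto simp: le_refl)
next
  case (App t1 t2) then show ?case by (cases a; cases b) (auto simp: le_refl)
qed

lemma join_is: "le a t \<Longrightarrow> le b t \<Longrightarrow> (isA a \<longrightarrow> isA b \<longrightarrow> isA (join a b)) \<and>
   (isB a \<longrightarrow> isB b \<longrightarrow> isB (join a b)) \<and> (isN a \<longrightarrow> isN b \<longrightarrow> isN (join a b))"
proof (induct t arbitrary: a b)
  case (Var x) then show ?case by (cases a; cases b) auto
next
  case Bot then show ?case by (cases a; cases b) auto
next
  case (Lam t) then show ?case by (cases a; cases b) auto
next
  case (App t1 t2)
  show ?case
  proof (cases a)
    case Bot then show ?thesis by simp
  next
    case a: (App a1 a2)
    show ?thesis
    proof (cases b)
      case Bot then show ?thesis using a by simp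
    next
      case b: (App b1 b2)
      have l: "le a1 t1" "le a2 t2" "le b1 t1" "le b2 t2" using App.prems a b by auto
      have IH1: "(isA a1 \<longrightarrow> isA b1 \<longrightarrow> isA (join a1 b1)) \<and>
        (isB a1 \<longrightarrow> isB b1 \<longrightarrow> isB (join a1 b1)) \<and> (isN a1 \<longrightarrow> isN b1 \<longrightarrow> isN (join a1 b1))"
        using App.hyps(1) l by blast
      have IH2: "(isA a2 \<longrightarrow> isA b2 \<longrightarrow> isA (join a2 b2)) \<and>
        (isB a2 \<longrightarrow> isB b2 \<longrightarrow> isB (join a2 b2)) \<and> (isN a2 \<longrightarrow> isN b2 \<longrightarrow> isN (join a2 b2))"
        using App.hyps(2) l by blast
      have N: "isN a \<Longrightarrow> isN b \<Longrightarrow> isN (join a b)"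
      proof -
        assume na: "isN a" and nb: "isN b"
        show ?thesis
        proof (cases "\<exists>x. a1 = Var x")
          case True
          then obtain x where x: "a1 = Var x" by blast
          then have "t1 = Var x" using l by simp
          then have "b1 = Var x" using l L1[of b1 t1] nb b by (cases b1) auto
          then show ?thesis using x na nb a b IH2 by auto
        next
          case False
          then have "isN a1" "isA a2" using na a by auto
          then have "\<not> (\<exists>x. t1 = Var x)" using l isN_App_ex[of a1] by auto
          then have "isN b1" "isA b2" using nb b l by auto
          then show ?thesis using \<open>isN a1\<close> \<open>isA a2\<close> a b IH1 IH2 by auto
        qed
      qed
      have A: "isA a \<Longrightarrow> isA b \<Longrightarrow> isA (join a b)"
      proof -
        assume na: "isA a" and nb: "isA b"
        show ?thesis
        proof (cases "\<exists>A'. a1 = Lam A'")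
          case True
          then obtain A' where x: "a1 = Lam A'" by blast
          then obtain T where T: "t1 = Lam T" using l by (cases t1) auto
          then obtain B' where y: "b1 = Lam B'" using l nb b isN_App_ex[of b1] by (cases b1) auto
          have "isA (join (Lam A') (Lam B'))" using IH1 x y na nb a b by auto
          then show ?thesis using x y na nb a b IH2 by auto
        next
          case False
          then have "isN a" using na a by auto
          then have "\<not> (\<exists>B'. b1 = Lam B')" using l a isN_App_ex[of a1] by (cases t1) auto
          then have "isN b" using nb b by auto
          then show ?thesis using N \<open>isN a\<close> by (auto intro: isA_isB_isN.intros)
        qed
      qed
      have B: "isB a \<Longrightarrow> isB b \<Longrightarrow> isB (join a b)"
        using N a b by simp
      show ?thesis using A B N by blast
    qed (use App.prems a in auto)
  qed (use App.prems in auto)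
qed

theorem proposition2p7:
  assumes "no_bot M"
  shows "approximants M = {} \<or> is_ideal (approximants M)"
proof (cases "approximants M = {}")
  case False
  have dir: "directed (approximants M)" unfolding directed_def
  proof (intro ballI)
    fix a b assume a: "a \<in> approximants M" and b: "b \<in> approximants M"
    from a obtain N1 where N1: "isA a" "no_bot N1" "steps_v M N1" "le a N1"
      unfolding approximants_def approx_iff by blast
    from b obtain N2 where N2: "isA b" "no_bot N2" "steps_v M N2" "le b N2"
      unfolding approximants_def approx_iff by blast
    obtain N3 where N3: "steps_v N1 N3" "steps_v N2 N3"
      using step_CR N1(3) N2(3) unfolding CR_def by blast
    have nb: "no_bot N3" using no_bot_steps N3(1) N1(2) by blast
    have la: "le a N3" using pres_steps N3(1) N1 by blast
    have lb: "le b N3" using pres_steps N3(2) N2 by blast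
    have j: "le a (join a b)" "le b (join a b)" "le (join a b) N3" using join_le[OF la lb] by auto
    have "isA (join a b)" using join_is[OF la lb] N1(1) N2(1) by blast
    moreover have "steps_v M N3" using N1(3) N3(1) by simp
    ultimately have "join a b \<in> approximants M"
      unfolding approximants_def approx_iff using nb j by blast
    then show "\<exists>c\<in>approximants M. approx a c \<and> approx b c"
      using j approx_iff by blast
  qed
  have dc: "downward_closed (approximants M)" unfolding downward_closed_def approximants_def
    by (blast intro: approx.trans)
  show ?thesis using False dir dc unfolding is_ideal_def by blast
qed simp


end
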